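(* Let $M$ be a finite monoid and $e,f\in E(M)$, and let $X=MeM$, $Y=MfM$. Then $\mathrm{AIrr}_{\mathscr K(M)}(e,f)=fMe\setminus\nabla Y\nabla X$ and $\mathrm{Irr}_{\mathscr K(M)}(e,f)=\mathrm{Null}(\mathrm{AIrr}_{\mathscr K(M)}(e,f))$. In particular, both are $G_f\times G_e^{op}$-invariant subsets of $fMe$.
   Context: $E(M)$ is the set of idempotents. For a principal ideal $X$, $\nabla X=\{m\in M: X\not\subseteq MmM\}$, and $\nabla Y\nabla X=\{ab:a\in\nabla Y,b\in\nabla X\}$. The Karoubi envelope $\mathscr K(M)$ has objects $E(M)$, morphisms $e\to f$ the elements of $fMe$, composition the product of $M$. A morphism $m\colon e\to f$ is almost irreducible if whenever $m=gh$ in $\mathscr K(M)$, either $h$ is a split monomorphism or $g$ a split epimorphism; it is irreducible if moreover it is neither a split monomorphism nor a split epimorphism. $\mathrm{AIrr}_{\mathscr K(M)}(e,f)$, $\mathrm{Irr}_{\mathscr K(M)}(e,f)$ are the sets of such morphisms. $m$ is null if $m\notin mMm$; $\mathrm{Null}(A)$ is the set of null elements of $A$. $G_e$ is the group of units of $eMe$; $G_f\times G_e^{op}$-invariant means closed under left multiplication by $G_f$ and right multiplication by $G_e$. *)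

theory Defs
  imports Main
begin

text \<open>A finite monoid is modelled as a type of class monoid_mult and finite.\<close>

definition idems :: "'a::monoid_mult set" where
  "idems = {e. e * e = e}"

definition pideal :: "'a::monoid_mult \<Rightarrow> 'a set" where
  "pideal m = {a * m * b | a b. True}"

text \<open>fMe, the hom-set from e to f in the Karoubi envelope.\<close>
definition sandw :: "'a::monoid_mult \<Rightarrow> 'a \<Rightarrow> 'a set" where
  "sandw f e = {f * m * e | m. True}"

definition nabla :: "'a::monoid_mult set \<Rightarrow> 'a set" where
  "nabla X = {m. \<not> X \<subseteq> pideal m}"

definition setprod :: "'a::monoid_mult set \<Rightarrow> 'a set \<Rightarrow> 'a set" where
  "setprod A B = {a * b | a b. a \<in> A \<and> b \<in> B}"

text \<open>Karoubi envelope: m : e \<rightarrow> f (e, f idempotent) is split mono iff some r : f \<rightarrow> e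
  with r m = 1_e = e; split epi iff some s : f \<rightarrow> e with m s = 1_f = f.\<close>
definition split_mono :: "'a::monoid_mult \<Rightarrow> 'a \<Rightarrow> 'a \<Rightarrow> bool" where
  "split_mono e f m \<longleftrightarrow> (\<exists>r \<in> sandw e f. r * m = e)"

definition split_epi :: "'a::monoid_mult \<Rightarrow> 'a \<Rightarrow> 'a \<Rightarrow> bool" where
  "split_epi e f m \<longleftrightarrow> (\<exists>s \<in> sandw e f. m * s = f)"

definition AIrr :: "'a::monoid_mult \<Rightarrow> 'a \<Rightarrow> 'a set" where
  "AIrr e f = {m \<in> sandw f e. \<forall>k \<in> idems. \<forall>h \<in> sandw k e. \<forall>g \<in> sandw f k.
      m = g * h \<longrightarrow> split_mono e k h \<or> split_epi k f g}"

definition Irr :: "'a::monoid_mult \<Rightarrow> 'a \<Rightarrow> 'a set" where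
  "Irr e f = {m \<in> AIrr e f. \<not> split_mono e f m \<and> \<not> split_epi e f m}"

definition Null :: "'a::monoid_mult set \<Rightarrow> 'a set" where
  "Null A = {m \<in> A. m \<notin> {m * x * m | x. True}}"

definition unitgrp :: "'a::monoid_mult \<Rightarrow> 'a set" where
  "unitgrp e = {u \<in> sandw e e. \<exists>v \<in> sandw e e. u * v = e \<and> v * u = e}"

definition bi_invariant :: "'a::monoid_mult \<Rightarrow> 'a \<Rightarrow> 'a set \<Rightarrow> bool" where
  "bi_invariant e f S \<longleftrightarrow> (\<forall>m \<in> S. (\<forall>g \<in> unitgrp f. g * m \<in> S) \<and> (\<forall>g \<in> unitgrp e. m * g \<in> S))"

end

theory Submission
  imports Defs
begin

lemma idem_pow:
  fixes v :: "'a::{monoid_mult,finite}"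
  shows "\<exists>n>0. v^n * v^n = v^n"
proof -
  have "\<not> inj (\<lambda>n::nat. v^n)"
  proof
    assume "inj (\<lambda>n::nat. v^n)"
    hence "infinite (range (\<lambda>n::nat. v^n))" using finite_imageD by blast
    thus False by simp
  qed
  then obtain i j :: nat where ij: "i \<noteq> j" "v^i = v^j" unfolding inj_def by blast
  obtain i j :: nat where ij2: "i < j" "v^i = v^j"
    using ij by (metis linorder_neqE_nat)
  define p where "p = j - i"
  have p0: "p > 0" using ij2 p_def by simp
  have step: "v^(i+k) = v^(i+k+p)" for k
  proof -
    have "v^(i+k+p) = v^(j+k)" using ij2 p_def by (simp add: algebra_simps)
    also have "\<dots> = v^j * v^k" by (simp add: power_add)
    also have "\<dots> = v^i * v^k" using ij2 by simp
    finally show ?thesis by (simp add: power_add)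
  qed
  have per: "v^(i+k) = v^(i+k+q*p)" for k q
  proof (induction q)
    case 0 then show ?case by simp
  next
    case (Suc q)
    have "v^(i+k+Suc q*p) = v^(i+(k+q*p)+p)" by (simp add: algebra_simps)
    also have "\<dots> = v^(i+(k+q*p))" using step[of "k+q*p"] by simp
    finally show ?case using Suc by (simp add: algebra_simps)
  qed
  define n where "n = (i+1)*p"
  have "(i+1)*1 \<le> (i+1)*p" using p0 by (intro mult_le_mono2) simp
  hence ni: "n \<ge> i" using n_def by simp
  have "v^n * v^n = v^(i + (n-i) + (i+1)*p)" using ni n_def by (simp add: power_add[symmetric])
  also have "\<dots> = v^(i+(n-i))" using per[of "n-i" "i+1"] by simp
  also have "\<dots> = v^n" using ni by simp
  finally show ?thesis using p0 n_def by auto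
qed

lemma stab_L:
  fixes a b u w :: "'a::{monoid_mult,finite}"
  assumes "a = u * (b * a) * w"
  shows "\<exists>t. a = t * (b * a)"
proof -
  have it: "a = (u*b)^n * a * w^n" for n
  proof (induction n)
    case 0 then show ?case by simp
  next
    case (Suc n)
    have "(u*b)^Suc n * a * w^Suc n = (u*b)^n * (u * (b * a) * w) * w^n"
      by (simp only: power_Suc2[of "u*b"] power_Suc[of w] mult.assoc)
    also have "\<dots> = a" using Suc assms by simp
    finally show ?case by simp
  qed
  obtain n where n: "n > 0" "w^n * w^n = w^n" using idem_pow by blast
  have "a * w^n = (u*b)^n * a * (w^n * w^n)" using it[of n]
    by (metis mult.assoc)
  hence aw: "a * w^n = a" using n it[of n] by simp
  have "a = (u*b)^n * (a * w^n)" using it[of n] by (simp add: mult.assoc)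
  hence "a = (u*b)^n * a" using aw by simp
  also have "(u*b)^n = (u*b)^(n-1) * (u*b)" using n
    by (metis Suc_diff_1 power_Suc2)
  finally have "a = ((u*b)^(n-1) * u) * (b * a)" by (simp add: mult.assoc)
  thus ?thesis by blast
qed

lemma stab_R:
  fixes a b u w :: "'a::{monoid_mult,finite}"
  assumes "a = u * (a * b) * w"
  shows "\<exists>t. a = (a * b) * t"
proof -
  have it: "a = u^n * a * (b*w)^n" for n
  proof (induction n)
    case 0 then show ?case by simp
  next
    case (Suc n)
    have "u^Suc n * a * (b*w)^Suc n = u^n * (u * (a * b) * w) * (b*w)^n"
      by (simp only: power_Suc2[of u] power_Suc[of "b*w"] mult.assoc)
    also have "\<dots> = a" using Suc assms by simp
    finally show ?case by simp
  qed
  obtain n where n: "n > 0" "u^n * u^n = u^n" using idem_pow by blast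
  have "u^n * a = (u^n * u^n) * a * (b*w)^n" using it[of n]
    by (metis mult.assoc)
  hence ua: "u^n * a = a" using n it[of n] by simp
  have "a = (u^n * a) * (b*w)^n" using it[of n] by (simp add: mult.assoc)
  hence "a = a * (b*w)^n" using ua by simp
  also have "(b*w)^n = (b*w) * (b*w)^(n-1)" using n
    by (metis Suc_diff_1 power_Suc)
  finally have "a = (a * b) * (w * (b*w)^(n-1))" by (simp add: mult.assoc)
  thus ?thesis by blast
qed

lemma sandw_iff:
  fixes e f m :: "'a::monoid_mult"
  assumes "e*e = e" "f*f = f"
  shows "m \<in> sandw f e \<longleftrightarrow> f*m*e = m"
proof
  assume "m \<in> sandw f e"
  then obtain x where "m = f*x*e" unfolding sandw_def by blast
  thus "f*m*e = m" using assms by (metis mult.assoc)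
next
  assume "f*m*e = m" thus "m \<in> sandw f e" unfolding sandw_def by (metis (mono_tags, lifting) mem_Collect_eq)
qed

lemma nabla_iff:
  fixes e a :: "'a::monoid_mult"
  shows "a \<in> nabla (pideal e) \<longleftrightarrow> e \<notin> pideal a"
proof -
  have "pideal e \<subseteq> pideal a \<longleftrightarrow> e \<in> pideal a"
  proof
    assume "pideal e \<subseteq> pideal a"
    moreover have "e \<in> pideal e" unfolding pideal_def by (metis (mono_tags, lifting) mem_Collect_eq mult_1 mult_1_right)
    ultimately show "e \<in> pideal a" by blast
  next
    assume "e \<in> pideal a"
    then obtain x y where xy: "e = x*a*y" unfolding pideal_def by blast
    show "pideal e \<subseteq> pideal a"
    proof
      fix z assume "z \<in> pideal e"
      then obtain u w where "z = u*e*w" unfolding pideal_def by blast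
      hence "z = (u*x)*a*(y*w)" using xy by (simp add: mult.assoc)
      thus "z \<in> pideal a" unfolding pideal_def by blast
    qed
  qed
  thus ?thesis unfolding nabla_def by blast
qed

lemma pideal_mem: "(x::'a::monoid_mult) = u*a*w \<Longrightarrow> x \<in> pideal a"
  unfolding pideal_def by blast

lemma one_idem: "(1::'a::monoid_mult) \<in> idems" unfolding idems_def by simp

lemma AIrr_notprod:
  fixes e f m :: "'a::monoid_mult"
  assumes e: "e*e = e" and f: "f*f = f" and m: "m \<in> AIrr e f"
  shows "m \<notin> setprod (nabla (pideal f)) (nabla (pideal e))"
proof
  assume "m \<in> setprod (nabla (pideal f)) (nabla (pideal e))"
  then obtain a b where ab: "m = a*b" "f \<notin> pideal a" "e \<notin> pideal b"
    unfolding setprod_def nabla_iff by blast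
  have ms: "m \<in> sandw f e" and A: "\<forall>k \<in> idems. \<forall>h \<in> sandw k e. \<forall>g \<in> sandw f k.
      m = g * h \<longrightarrow> split_mono e k h \<or> split_epi k f g" using m unfolding AIrr_def by auto
  have fme: "f*m*e = m" using ms sandw_iff e f by blast
  have h: "b*e \<in> sandw 1 e" unfolding sandw_def by force
  have g: "f*a \<in> sandw f 1" unfolding sandw_def by force
  have "m = (f*a)*(b*e)" using fme ab(1) by (simp add: mult.assoc)
  hence "split_mono e 1 (b*e) \<or> split_epi 1 f (f*a)" using A one_idem h g by blast
  thus False
  proof
    assume "split_mono e 1 (b*e)"
    then obtain r where "r*(b*e) = e" unfolding split_mono_def by blast
    hence "e = r*b*e" by (simp add: mult.assoc)
    thus False using ab pideal_mem by metis
  next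
    assume "split_epi 1 f (f*a)"
    then obtain s where "(f*a)*s = f" unfolding split_epi_def by blast
    hence "f = f*a*s" by (simp add: mult.assoc)
    thus False using ab pideal_mem by metis
  qed
qed

lemma notprod_AIrr:
  fixes e f m :: "'a::{monoid_mult,finite}"
  assumes e: "e*e = e" and f: "f*f = f" and ms: "m \<in> sandw f e"
    and np: "m \<notin> setprod (nabla (pideal f)) (nabla (pideal e))"
  shows "m \<in> AIrr e f"
  unfolding AIrr_def
proof (intro CollectI conjI ballI impI ms)
  fix k h g assume k: "k \<in> idems" and h: "h \<in> sandw k e" and g: "g \<in> sandw f k" and mgh: "m = g*h"
  have kk: "k*k = k" using k idems_def by auto
  have hk: "k*h*e = h" using h sandw_iff e kk by blast
  have gk: "f*g*k = g" using g sandw_iff f kk by blast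
  have kh: "k*h = h" using hk kk by (metis mult.assoc)
  have he: "h*e = h" using hk e by (metis mult.assoc)
  have fg: "f*g = g" using gk f by (metis mult.assoc)
  have gk2: "g*k = g" using gk kk by (metis mult.assoc)
  have "\<not> (g \<in> nabla (pideal f) \<and> h \<in> nabla (pideal e))"
    using np mgh unfolding setprod_def by blast
  hence "e \<in> pideal h \<or> f \<in> pideal g" unfolding nabla_iff by blast
  thus "split_mono e k h \<or> split_epi k f g"
  proof
    assume "e \<in> pideal h"
    then obtain x y where "e = x*h*y" unfolding pideal_def by blast
    hence "e = x*(h*e)*y" using he by simp
    then obtain t where "e = t*(h*e)" using stab_L by blast
    hence t: "e = t*h" using he by simp
    have "e*t*k \<in> sandw e k" unfolding sandw_def by blast
    moreover have "(e*t*k)*h = e" using t kh e by (simp add: mult.assoc)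
    ultimately show ?thesis unfolding split_mono_def by blast
  next
    assume "f \<in> pideal g"
    then obtain x y where "f = x*g*y" unfolding pideal_def by blast
    hence "f = x*(f*g)*y" using fg by simp
    then obtain t where "f = (f*g)*t" using stab_R by blast
    hence t: "f = g*t" using fg by simp
    have "k*t*f \<in> sandw k f" unfolding sandw_def by blast
    moreover have "g*(k*t*f) = f" using t gk2 f by (metis mult.assoc)
    ultimately show ?thesis unfolding split_epi_def by blast
  qed
qed

lemma split_regular:
  fixes e f m :: "'a::monoid_mult"
  assumes e: "e*e = e" and f: "f*f = f" and ms: "m \<in> sandw f e"
    and sp: "split_mono e f m \<or> split_epi e f m"
  shows "m \<in> {m * x * m | x. True}"
proof -
  have fme: "f*m*e = m" using ms sandw_iff e f by blast
  have me: "m*e = m" using fme e by (metis mult.assoc)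
  have fm: "f*m = m" using fme f by (metis mult.assoc)
  from sp show ?thesis
  proof
    assume "split_mono e f m"
    then obtain r where "r*m = e" unfolding split_mono_def by blast
    hence "m = m*r*m" using me by (simp add: mult.assoc)
    thus ?thesis by blast
  next
    assume "split_epi e f m"
    then obtain s where "m*s = f" unfolding split_epi_def by blast
    hence "m = m*s*m" using fm by (simp add: mult.assoc)
    thus ?thesis by blast
  qed
qed

lemma regular_split:
  fixes e f m :: "'a::monoid_mult"
  assumes e: "e*e = e" and f: "f*f = f" and m: "m \<in> AIrr e f"
    and reg: "m \<in> {m * x * m | x. True}"
  shows "split_mono e f m \<or> split_epi e f m"
proof -
  have ms: "m \<in> sandw f e" and A: "\<forall>k \<in> idems. \<forall>h \<in> sandw k e. \<forall>g \<in> sandw f k.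
      m = g * h \<longrightarrow> split_mono e k h \<or> split_epi k f g" using m unfolding AIrr_def by auto
  have fme: "f*m*e = m" using ms sandw_iff e f by blast
  have me: "m*e = m" using fme e by (metis mult.assoc)
  have fm: "f*m = m" using fme f by (metis mult.assoc)
  obtain x where x: "m = m*x*m" using reg by blast
  define x' where "x' = e*x*f"
  have "m*x'*m = (m*e)*x*(f*m)" by (simp add: x'_def mult.assoc)
  hence mx: "m = m*x'*m" using x me fm by simp
  define k where "k = x'*m"
  have kk: "k*k = k" using mx k_def by (metis mult.assoc)
  hence ki: "k \<in> idems" unfolding idems_def by simp
  have hs: "k \<in> sandw k e" using sandw_iff[OF e kk] kk me k_def by (simp add: mult.assoc)
  have gs: "m \<in> sandw f k" using sandw_iff[OF kk f] fm mx k_def by (simp add: mult.assoc)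
  have "m = m * k" using mx k_def by (simp add: mult.assoc)
  hence "split_mono e k k \<or> split_epi k f m" using A ki hs gs by blast
  thus ?thesis
  proof
    assume "split_mono e k k"
    then obtain r where r: "r \<in> sandw e k" "r*k = e" unfolding split_mono_def by blast
    obtain t where t: "r = e*t*k" using r unfolding sandw_def by blast
    have "r*x' \<in> sandw e f" unfolding sandw_def t x'_def
      by (metis (mono_tags, lifting) mem_Collect_eq mult.assoc)
    moreover have "(r*x')*m = e" using r k_def by (simp add: mult.assoc)
    ultimately show ?thesis unfolding split_mono_def by blast
  next
    assume "split_epi k f m"
    then obtain s where s: "s \<in> sandw k f" "m*s = f" unfolding split_epi_def by blast
    obtain t where t: "s = k*t*f" using s unfolding sandw_def by blast
    have "s \<in> sandw e f" unfolding sandw_def t k_def x'_def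
      by (metis (mono_tags, lifting) mem_Collect_eq mult.assoc)
    thus ?thesis using s unfolding split_epi_def by blast
  qed
qed

theorem mainTheorem17:
  fixes e f :: "'a::{monoid_mult, finite}"
  assumes "e \<in> idems" and "f \<in> idems"
  defines "X \<equiv> pideal e" and "Y \<equiv> pideal f"
  shows "AIrr e f = sandw f e - setprod (nabla Y) (nabla X)
    \<and> Irr e f = Null (AIrr e f)
    \<and> AIrr e f \<subseteq> sandw f e \<and> bi_invariant e f (AIrr e f)
    \<and> Irr e f \<subseteq> sandw f e \<and> bi_invariant e f (Irr e f)"
proof -
  have e: "e*e = e" and f: "f*f = f" using assms(1,2) unfolding idems_def by auto
  have A: "AIrr e f = sandw f e - setprod (nabla Y) (nabla X)"
  proof
    show "AIrr e f \<subseteq> sandw f e - setprod (nabla Y) (nabla X)"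
      using AIrr_notprod[OF e f] unfolding X_def Y_def AIrr_def by blast
    show "sandw f e - setprod (nabla Y) (nabla X) \<subseteq> AIrr e f"
      using notprod_AIrr[OF e f] unfolding X_def Y_def by blast
  qed
  have sub: "AIrr e f \<subseteq> sandw f e" unfolding AIrr_def by blast
  have I: "Irr e f = Null (AIrr e f)"
    unfolding Irr_def Null_def
    using split_regular[OF e f] regular_split[OF e f] sub by blast
  have unitL: "g*m \<in> sandw f e \<and> (\<exists>v. v*(g*m) = m)" if g: "g \<in> unitgrp f" and m: "m \<in> sandw f e" for g m
  proof -
    obtain v where v: "v \<in> sandw f f" "v*g = f" "g \<in> sandw f f" using g unfolding unitgrp_def by blast
    have fme: "f*m*e = m" using m sandw_iff e f by blast
    have fg: "f*g*f = g" using v(3) sandw_iff f by blast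
    have "f*(g*m)*e = g*m" using fme fg f by (metis mult.assoc)
    hence "g*m \<in> sandw f e" using sandw_iff e f by blast
    moreover have "v*(g*m) = m" using v(2) fme f by (metis mult.assoc)
    ultimately show ?thesis by blast
  qed
  have unitR: "m*g \<in> sandw f e \<and> (\<exists>v. (m*g)*v = m)" if g: "g \<in> unitgrp e" and m: "m \<in> sandw f e" for g m
  proof -
    obtain v where v: "v \<in> sandw e e" "g*v = e" "g \<in> sandw e e" using g unfolding unitgrp_def by blast
    have fme: "f*m*e = m" using m sandw_iff e f by blast
    have eg: "e*g*e = g" using v(3) sandw_iff e by blast
    have "f*(m*g)*e = m*g" using fme eg e by (metis mult.assoc)
    hence "m*g \<in> sandw f e" using sandw_iff e f by blast
    moreover have "(m*g)*v = m" using v(2) fme e by (metis mult.assoc)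
    ultimately show ?thesis by blast
  qed
  have nab: "a \<in> nabla Z \<Longrightarrow> v*a \<in> nabla Z" "a \<in> nabla Z \<Longrightarrow> a*v \<in> nabla Z" for a v Z
  proof -
    have "pideal (v*a) \<subseteq> pideal a" "pideal (a*v) \<subseteq> pideal a"
    proof -
      show "pideal (v*a) \<subseteq> pideal a"
      proof
        fix z assume "z \<in> pideal (v*a)"
        then obtain x y where "z = x*(v*a)*y" unfolding pideal_def by blast
        hence "z = (x*v)*a*y" by (simp add: mult.assoc)
        thus "z \<in> pideal a" by (rule pideal_mem)
      qed
      show "pideal (a*v) \<subseteq> pideal a"
      proof
        fix z assume "z \<in> pideal (a*v)"
        then obtain x y where "z = x*(a*v)*y" unfolding pideal_def by blast
        hence "z = x*a*(v*y)" by (simp add: mult.assoc)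
        thus "z \<in> pideal a" by (rule pideal_mem)
      qed
    qed
    thus "a \<in> nabla Z \<Longrightarrow> v*a \<in> nabla Z" "a \<in> nabla Z \<Longrightarrow> a*v \<in> nabla Z"
      unfolding nabla_def by blast+
  qed
  have BA: "bi_invariant e f (AIrr e f)"
    unfolding bi_invariant_def
  proof (intro ballI conjI)
    fix m g assume m: "m \<in> AIrr e f" and g: "g \<in> unitgrp f"
    have ms: "m \<in> sandw f e" "m \<notin> setprod (nabla Y) (nabla X)" using m A by auto
    obtain v where gm: "g*m \<in> sandw f e" "v*(g*m) = m" using unitL[OF g ms(1)] by blast
    have "g*m \<notin> setprod (nabla Y) (nabla X)"
    proof
      assume "g*m \<in> setprod (nabla Y) (nabla X)"
      then obtain a b where "g*m = a*b" "a \<in> nabla Y" "b \<in> nabla X" unfolding setprod_def by blast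
      hence "m = (v*a)*b" "v*a \<in> nabla Y" using gm nab by (auto simp: mult.assoc)
      thus False using ms(2) \<open>b \<in> nabla X\<close> unfolding setprod_def by blast
    qed
    thus "g*m \<in> AIrr e f" using A gm by blast
  next
    fix m g assume m: "m \<in> AIrr e f" and g: "g \<in> unitgrp e"
    have ms: "m \<in> sandw f e" "m \<notin> setprod (nabla Y) (nabla X)" using m A by auto
    obtain v where gm: "m*g \<in> sandw f e" "(m*g)*v = m" using unitR[OF g ms(1)] by blast
    have "m*g \<notin> setprod (nabla Y) (nabla X)"
    proof
      assume "m*g \<in> setprod (nabla Y) (nabla X)"
      then obtain a b where "m*g = a*b" "a \<in> nabla Y" "b \<in> nabla X" unfolding setprod_def by blast
      hence "m = a*(b*v)" "b*v \<in> nabla X" using gm nab by (auto simp: mult.assoc)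
      thus False using ms(2) \<open>a \<in> nabla Y\<close> unfolding setprod_def by blast
    qed
    thus "m*g \<in> AIrr e f" using A gm by blast
  qed
  have BI: "bi_invariant e f (Irr e f)"
    unfolding bi_invariant_def I
  proof (intro ballI conjI)
    fix m g assume m: "m \<in> Null (AIrr e f)" and g: "g \<in> unitgrp f"
    have mA: "m \<in> AIrr e f" and mn: "\<forall>x. m \<noteq> m*x*m" using m unfolding Null_def by auto
    obtain v where gm: "v*(g*m) = m" using unitL[OF g] mA sub by blast
    have "g*m \<in> AIrr e f" using BA mA g unfolding bi_invariant_def by blast
    moreover have "\<forall>x. g*m \<noteq> (g*m)*x*(g*m)"
    proof (intro allI notI)
      fix x assume "g*m = (g*m)*x*(g*m)"
      hence "v*(g*m) = v*(g*m)*x*(g*m)" by (metis mult.assoc)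
      hence "m = m*(x*g)*m" using gm by (simp add: mult.assoc)
      thus False using mn by blast
    qed
    ultimately show "g*m \<in> Null (AIrr e f)" unfolding Null_def by blast
  next
    fix m g assume m: "m \<in> Null (AIrr e f)" and g: "g \<in> unitgrp e"
    have mA: "m \<in> AIrr e f" and mn: "\<forall>x. m \<noteq> m*x*m" using m unfolding Null_def by auto
    obtain v where gm: "(m*g)*v = m" using unitR[OF g] mA sub by blast
    have "m*g \<in> AIrr e f" using BA mA g unfolding bi_invariant_def by blast
    moreover have "\<forall>x. m*g \<noteq> (m*g)*x*(m*g)"
    proof (intro allI notI)
      fix x assume "m*g = (m*g)*x*(m*g)"
      hence "(m*g)*v = (m*g)*x*(m*g)*v" by (metis mult.assoc)
      hence "m = m*(g*x)*m" using gm by (simp add: mult.assoc)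
      thus False using mn by blast
    qed
    ultimately show "m*g \<in> Null (AIrr e f)" unfolding Null_def by blast
  qed
  have "Irr e f \<subseteq> sandw f e" using sub unfolding Irr_def by blast
  thus ?thesis using A I sub BA BI by blast
qed

end
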